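(* Let $\Gamma$ be a distance-regular graph with diameter $D\ge3$, valency $k$, and $a_1\ne0$. Let $\sigma_0,\dots,\sigma_D$ be a nontrivial pseudo cosine sequence which is tight, with auxiliary parameter $\varepsilon$, and write $\sigma=\sigma_1$. Then $\sigma\ne1$, $(\sigma^2-\sigma_2)(1-\varepsilon\sigma)\ne0$, and $$k=h\,\frac{\sigma-\varepsilon}{\sigma-1},\qquad\text{where}\quad h=\frac{(1-\sigma)(1-\sigma_2)}{(\sigma^2-\sigma_2)(1-\varepsilon\sigma)}.$$
   Context: $\Gamma$ is a finite connected undirected graph without loops or multiple edges, distance-regular with diameter $D$, intersection numbers $a_i,b_i,c_i$ ($c_0=0$, $b_D=0$), valency $k=b_0$, $c_i+a_i+b_i=k$. For $\theta\in\mathbb{R}$ the pseudo cosine sequence for $\theta$ is the sequence of reals $\sigma_0,\dots,\sigma_D$ with $\sigma_0=1$ and $c_i\sigma_{i-1}+a_i\sigma_i+b_i\sigma_{i+1}=\theta\sigma_i$ for $0\le i\le D-1$; nontrivial means $\sigma_1\ne1$. Pseudo cosine sequences $\sigma_i$, $\rho_i$ form a tight pair if $(\sigma_i\rho_i)_{i=0}^D$ is a pseudo cosine sequence. For a tight pair of nontrivial pseudo cosine sequences, an auxiliary parameter is a real $\varepsilon$ with $\sigma_i\rho_i-\sigma_{i-1}\rho_{i-1}=\varepsilon(\sigma_{i-1}\rho_i-\sigma_i\rho_{i-1})$ for $1\le i\le D$. When $a_1\ne0$, a nontrivial pseudo cosine sequence is tight if some nontrivial pseudo cosine sequence forms a tight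 pair with it; its auxiliary parameter is the (uniquely determined) auxiliary parameter of that pair. *)

theory Defs
  imports Complex_Main
begin

fun reach :: "'a set \<Rightarrow> ('a \<Rightarrow> 'a \<Rightarrow> bool) \<Rightarrow> nat \<Rightarrow> 'a \<Rightarrow> 'a \<Rightarrow> bool" where
  "reach V E 0 x y = (x = y)"
| "reach V E (Suc n) x y = (\<exists>z\<in>V. E x z \<and> reach V E n z y)"

definition gdist :: "'a set \<Rightarrow> ('a \<Rightarrow> 'a \<Rightarrow> bool) \<Rightarrow> 'a \<Rightarrow> 'a \<Rightarrow> nat" where
  "gdist V E x y = (LEAST n. reach V E n x y)"

definition finite_connected_simple_graph :: "'a set \<Rightarrow> ('a \<Rightarrow> 'a \<Rightarrow> bool) \<Rightarrow> bool" where
  "finite_connected_simple_graph V E \<longleftrightarrow>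
     finite V \<and> V \<noteq> {} \<and>
     (\<forall>x y. E x y \<longrightarrow> x \<in> V \<and> y \<in> V) \<and>
     (\<forall>x y. E x y \<longrightarrow> E y x) \<and>
     (\<forall>x. \<not> E x x) \<and>
     (\<forall>x\<in>V. \<forall>y\<in>V. \<exists>n. reach V E n x y)"

definition diameter :: "'a set \<Rightarrow> ('a \<Rightarrow> 'a \<Rightarrow> bool) \<Rightarrow> nat" where
  "diameter V E = Max {gdist V E x y | x y. x \<in> V \<and> y \<in> V}"

definition distance_regular ::
  "'a set \<Rightarrow> ('a \<Rightarrow> 'a \<Rightarrow> bool) \<Rightarrow> nat \<Rightarrow> (nat \<Rightarrow> nat) \<Rightarrow> (nat \<Rightarrow> nat) \<Rightarrow> (nat \<Rightarrow> nat) \<Rightarrow> bool" where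
  "distance_regular V E D a b c \<longleftrightarrow>
     finite_connected_simple_graph V E \<and> D = diameter V E \<and>
     c 0 = 0 \<and> b D = 0 \<and>
     (\<forall>i\<le>D. \<forall>x\<in>V. \<forall>y\<in>V. gdist V E x y = i \<longrightarrow>
        card {z\<in>V. E y z \<and> gdist V E x z = i} = a i \<and>
        card {z\<in>V. E y z \<and> gdist V E x z = i + 1} = b i \<and>
        (1 \<le> i \<longrightarrow> card {z\<in>V. E y z \<and> gdist V E x z + 1 = i} = c i))"

definition pseudo_cosine ::
  "nat \<Rightarrow> (nat \<Rightarrow> nat) \<Rightarrow> (nat \<Rightarrow> nat) \<Rightarrow> (nat \<Rightarrow> nat) \<Rightarrow> real \<Rightarrow> (nat \<Rightarrow> real) \<Rightarrow> bool" where
  "pseudo_cosine D a b c \<theta> \<sigma> \<longleftrightarrow> \<sigma> 0 = 1 \<and>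
     (\<forall>i<D. (if i = 0 then 0 else real (c i) * \<sigma> (i - 1)) + real (a i) * \<sigma> i
              + real (b i) * \<sigma> (i + 1) = \<theta> * \<sigma> i)"

definition is_pseudo_cosine ::
  "nat \<Rightarrow> (nat \<Rightarrow> nat) \<Rightarrow> (nat \<Rightarrow> nat) \<Rightarrow> (nat \<Rightarrow> nat) \<Rightarrow> (nat \<Rightarrow> real) \<Rightarrow> bool" where
  "is_pseudo_cosine D a b c \<sigma> \<longleftrightarrow> (\<exists>\<theta>. pseudo_cosine D a b c \<theta> \<sigma>)"

definition nontrivial_pc ::
  "nat \<Rightarrow> (nat \<Rightarrow> nat) \<Rightarrow> (nat \<Rightarrow> nat) \<Rightarrow> (nat \<Rightarrow> nat) \<Rightarrow> (nat \<Rightarrow> real) \<Rightarrow> bool" where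
  "nontrivial_pc D a b c \<sigma> \<longleftrightarrow> is_pseudo_cosine D a b c \<sigma> \<and> \<sigma> 1 \<noteq> 1"

definition tight_pair ::
  "nat \<Rightarrow> (nat \<Rightarrow> nat) \<Rightarrow> (nat \<Rightarrow> nat) \<Rightarrow> (nat \<Rightarrow> nat) \<Rightarrow> (nat \<Rightarrow> real) \<Rightarrow> (nat \<Rightarrow> real) \<Rightarrow> bool" where
  "tight_pair D a b c \<sigma> \<rho> \<longleftrightarrow> is_pseudo_cosine D a b c \<sigma> \<and> is_pseudo_cosine D a b c \<rho> \<and>
     is_pseudo_cosine D a b c (\<lambda>i. \<sigma> i * \<rho> i)"

definition auxiliary_parameter :: "nat \<Rightarrow> (nat \<Rightarrow> real) \<Rightarrow> (nat \<Rightarrow> real) \<Rightarrow> real \<Rightarrow> bool" where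
  "auxiliary_parameter D \<sigma> \<rho> \<epsilon> \<longleftrightarrow>
     (\<forall>i\<in>{1..D}. \<sigma> i * \<rho> i - \<sigma> (i - 1) * \<rho> (i - 1)
                 = \<epsilon> * (\<sigma> (i - 1) * \<rho> i - \<sigma> i * \<rho> (i - 1)))"

end

theory Submission
  imports Defs
begin

lemma reach_V: "reach V E n x y \<Longrightarrow> x \<in> V \<Longrightarrow> y \<in> V"
  by (induction n arbitrary: x) auto

lemma reach_trans: "reach V E m x y \<Longrightarrow> reach V E n y z \<Longrightarrow> reach V E (m+n) x z"
  by (induction m arbitrary: x) auto

context
  fixes V :: "'v set" and E
  assumes G: "finite_connected_simple_graph V E"
begin

lemma Gsym: "E x y \<Longrightarrow> E y x" using G unfolding finite_connected_simple_graph_def by blast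
lemma GV: "E x y \<Longrightarrow> x \<in> V \<and> y \<in> V" using G unfolding finite_connected_simple_graph_def by blast
lemma Girr: "\<not> E x x" using G unfolding finite_connected_simple_graph_def by blast
lemma Gfin: "finite V" using G unfolding finite_connected_simple_graph_def by blast
lemma Gconn: "x \<in> V \<Longrightarrow> y \<in> V \<Longrightarrow> \<exists>n. reach V E n x y"
  using G unfolding finite_connected_simple_graph_def by blast

lemma reach_sym: "reach V E n x y \<Longrightarrow> x \<in> V \<Longrightarrow> reach V E n y x"
proof (induction n arbitrary: x)
  case 0 then show ?case by simp
next
  case (Suc n)
  then obtain z where z: "z \<in> V" "E x z" "reach V E n z y" by auto
  have "reach V E n y z" using Suc.IH z by auto
  moreover have "reach V E 1 z x" using z Gsym Suc.prems by auto
  ultimately show ?case using reach_trans by fastforce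
qed

lemma d_reach: "x \<in> V \<Longrightarrow> y \<in> V \<Longrightarrow> reach V E (gdist V E x y) x y"
  unfolding gdist_def using Gconn by (meson LeastI_ex)

lemma d_le: "reach V E n x y \<Longrightarrow> gdist V E x y \<le> n"
  unfolding gdist_def by (rule Least_le)

lemma d_sym: "x \<in> V \<Longrightarrow> y \<in> V \<Longrightarrow> gdist V E x y = gdist V E y x"
  by (meson antisym d_le d_reach reach_sym)

lemma d_tri: "x \<in> V \<Longrightarrow> y \<in> V \<Longrightarrow> z \<in> V \<Longrightarrow> gdist V E x z \<le> gdist V E x y + gdist V E y z"
  by (meson d_le d_reach reach_trans)

lemma d0: "x \<in> V \<Longrightarrow> y \<in> V \<Longrightarrow> gdist V E x y = 0 \<longleftrightarrow> x = y"
proof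
  assume "x \<in> V" "y \<in> V" "gdist V E x y = 0"
  thus "x = y" using d_reach by fastforce
next
  assume "x \<in> V" "x = y" thus "gdist V E x y = 0" using d_le[of 0 x y] by auto
qed

lemma d1: "x \<in> V \<Longrightarrow> y \<in> V \<Longrightarrow> gdist V E x y = 1 \<longleftrightarrow> E x y"
proof
  assume y: "x \<in> V" "y \<in> V" and "gdist V E x y = 1"
  hence "reach V E 1 x y" using d_reach by fastforce
  thus "E x y" by auto
next
  assume y: "x \<in> V" "y \<in> V" and e: "E x y"
  hence "reach V E 1 x y" by auto
  hence "gdist V E x y \<le> 1" by (rule d_le)
  moreover have "gdist V E x y \<noteq> 0" using d0 e GV Girr by metis
  ultimately show "gdist V E x y = 1" by simp
qed

lemma step: "x \<in> V \<Longrightarrow> u \<in> V \<Longrightarrow> gdist V E x u = Suc n \<Longrightarrow>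
   \<exists>y\<in>V. E x y \<and> gdist V E y u = n"
proof -
  assume x: "x \<in> V" and u: "u \<in> V" and d: "gdist V E x u = Suc n"
  have "reach V E (Suc n) x u" using d_reach[OF x u] d by simp
  then obtain y where y: "y \<in> V" "E x y" "reach V E n y u" by auto
  have "gdist V E y u \<le> n" using y d_le by blast
  moreover have "gdist V E x u \<le> gdist V E x y + gdist V E y u" using d_tri x y u by blast
  moreover have "gdist V E x y = 1" using d1 y GV by blast
  ultimately show ?thesis using y d by auto
qed

lemma mid: "x \<in> V \<Longrightarrow> u \<in> V \<Longrightarrow> gdist V E x u = n \<Longrightarrow> m \<le> n \<Longrightarrow>
   \<exists>w\<in>V. gdist V E x w = m \<and> gdist V E w u = n - m"
proof (induction n arbitrary: x m)
  case 0 thus ?case using d0 by fastforce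
next
  case (Suc n)
  show ?case
  proof (cases m)
    case 0 thus ?thesis using Suc.prems d0 by fastforce
  next
    case (Suc m')
    obtain y where y: "y \<in> V" "E x y" "gdist V E y u = n" using step Suc.prems by blast
    obtain w where w: "w \<in> V" "gdist V E y w = m'" "gdist V E w u = n - m'"
      using Suc.IH[OF y(1) Suc.prems(2) y(3)] Suc.prems(4) \<open>m = Suc m'\<close> by auto
    have "gdist V E x y = 1" using d1 y GV by blast
    hence a: "gdist V E x w \<le> Suc m'" using d_tri[of x y w] y w Suc.prems by auto
    have "gdist V E x u \<le> gdist V E x w + gdist V E w u" using d_tri w Suc.prems by blast
    hence "gdist V E x w \<ge> Suc m'" using w Suc.prems \<open>m = Suc m'\<close> by auto
    thus ?thesis using a w \<open>m = Suc m'\<close> Suc.prems by auto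
  qed
qed

end

lemma card_ne0: "finite A \<Longrightarrow> w \<in> A \<Longrightarrow> card A \<noteq> 0"
  by auto

lemma drg_facts:
  assumes drg: "distance_regular V E D a b c" and D3: "D \<ge> 3" and a1: "a 1 \<noteq> 0"
  shows "a 0 = 0 \<and> c 1 = 1 \<and> a 1 + b 1 + c 1 = b 0 \<and> b 1 \<noteq> 0 \<and> b 2 \<noteq> 0 \<and> a 2 \<noteq> 0"
proof -
  have G: "finite_connected_simple_graph V E" using drg unfolding distance_regular_def by blast
  have DD: "D = diameter V E" using drg unfolding distance_regular_def by blast
  have DR: "\<And>i x y. i \<le> D \<Longrightarrow> x \<in> V \<Longrightarrow> y \<in> V \<Longrightarrow> gdist V E x y = i \<Longrightarrow>
        card {z\<in>V. E y z \<and> gdist V E x z = i} = a i \<and>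
        card {z\<in>V. E y z \<and> gdist V E x z = i + 1} = b i \<and>
        (1 \<le> i \<longrightarrow> card {z\<in>V. E y z \<and> gdist V E x z + 1 = i} = c i)"
    using drg unfolding distance_regular_def by blast
  have fin: "finite V" using Gfin[OF G] .
  have ne: "V \<noteq> {}" using G unfolding finite_connected_simple_graph_def by blast
  let ?S = "{gdist V E x y | x y. x \<in> V \<and> y \<in> V}"
  have Seq: "?S = (\<lambda>(x,y). gdist V E x y) ` (V \<times> V)" by auto
  have "finite ?S" unfolding Seq using fin by simp
  moreover have "?S \<noteq> {}" using ne by auto
  ultimately have "D \<in> ?S" unfolding DD diameter_def by (rule Max_in)
  then obtain x u0 where xu0: "x \<in> V" "u0 \<in> V" "gdist V E x u0 = D" by auto
  obtain u where u: "u \<in> V" "gdist V E x u = 3"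
    using mid[OF G xu0(1,2,3) D3] by auto
  obtain z where z: "z \<in> V" "gdist V E x z = 2" "gdist V E z u = 1"
    using mid[OF G xu0(1) u(1) u(2), of 2] by auto
  obtain y where y: "y \<in> V" "gdist V E x y = 1" "gdist V E y z = 1"
    using mid[OF G xu0(1) z(1) z(2), of 1] by auto
  have Exy: "E x y" using d1[OF G] y xu0 by blast
  have Eyz: "E y z" using d1[OF G] y z by blast
  have Ezu: "E z u" using d1[OF G] u z by blast
  have "card {w\<in>V. E x w \<and> gdist V E x w = 0} = a 0"
    using DR[of 0 x x] xu0 d0[OF G] by auto
  moreover have "{w\<in>V. E x w \<and> gdist V E x w = 0} = {}"
    using d0[OF G] xu0(1) Girr[OF G] by auto
  ultimately have A0: "a 0 = 0" by simp
  have "card {w\<in>V. E y w \<and> gdist V E y w = 0 + 1} = b 0"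
    using DR[of 0 y y] y d0[OF G] by auto
  moreover have "{w\<in>V. E y w \<and> gdist V E y w = 0 + 1} = {w\<in>V. E y w}"
    using d1[OF G] y(1) by auto
  ultimately have B0: "card {w\<in>V. E y w} = b 0" by simp
  have DR1: "card {w\<in>V. E y w \<and> gdist V E x w = 1} = a 1 \<and>
        card {w\<in>V. E y w \<and> gdist V E x w = 1 + 1} = b 1 \<and>
        card {w\<in>V. E y w \<and> gdist V E x w + 1 = 1} = c 1"
    using DR[of 1 x y] y xu0 D3 by auto
  have Cset: "{w\<in>V. E y w \<and> gdist V E x w + 1 = 1} = {x}"
  proof -
    have "E y x" using Gsym[OF G Exy] .
    thus ?thesis using d0[OF G] xu0(1) by auto
  qed
  hence C1: "c 1 = 1" using DR1 by simp
  have le2: "\<And>w. w \<in> V \<Longrightarrow> E y w \<Longrightarrow> gdist V E x w \<le> 2"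
  proof -
    fix w assume "w \<in> V" "E y w"
    hence "gdist V E y w = 1" using d1[OF G] y(1) by blast
    thus "gdist V E x w \<le> 2" using d_tri[OF G, of x y w] \<open>w \<in> V\<close> y xu0 by simp
  qed
  have split: "{w\<in>V. E y w} = {w\<in>V. E y w \<and> gdist V E x w + 1 = 1} \<union>
     ({w\<in>V. E y w \<and> gdist V E x w = 1} \<union> {w\<in>V. E y w \<and> gdist V E x w = 1 + 1})"
    using le2 by fastforce
  have "card {w\<in>V. E y w} = card {w\<in>V. E y w \<and> gdist V E x w + 1 = 1} +
     (card {w\<in>V. E y w \<and> gdist V E x w = 1} + card {w\<in>V. E y w \<and> gdist V E x w = 1 + 1})"
  proof -
    let ?C = "{w\<in>V. E y w \<and> gdist V E x w + 1 = 1}"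
    let ?A = "{w\<in>V. E y w \<and> gdist V E x w = 1}"
    let ?B = "{w\<in>V. E y w \<and> gdist V E x w = 1 + 1}"
    have f: "finite ?C" "finite ?A" "finite ?B" using fin by auto
    have "card (?A \<union> ?B) = card ?A + card ?B"
      by (rule card_Un_disjoint) (use f in auto)
    moreover have "card (?C \<union> (?A \<union> ?B)) = card ?C + card (?A \<union> ?B)"
      by (rule card_Un_disjoint) (use f in auto)
    ultimately show ?thesis unfolding split by simp
  qed
  hence SUM: "a 1 + b 1 + c 1 = b 0" using DR1 B0 by simp
  have B1: "b 1 \<noteq> 0"
    using DR1 card_ne0[of "{w\<in>V. E y w \<and> gdist V E x w = 1 + 1}" z] fin Eyz z by auto
  have DR2: "card {w\<in>V. E z w \<and> gdist V E x w = 2} = a 2 \<and>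
        card {w\<in>V. E z w \<and> gdist V E x w = 2 + 1} = b 2"
    using DR[of 2 x z] z xu0 D3 by auto
  have B2: "b 2 \<noteq> 0"
    using DR2 card_ne0[of "{w\<in>V. E z w \<and> gdist V E x w = 2 + 1}" u] fin Ezu u by auto
  have "card {w\<in>V. E z w \<and> gdist V E y w = 1} = a 1"
    using DR[of 1 y z] y z D3 by auto
  hence "{w\<in>V. E z w \<and> gdist V E y w = 1} \<noteq> {}" using a1 by (metis card.empty)
  then obtain w where w: "w \<in> V" "E z w" "gdist V E y w = 1" by blast
  have Eyw: "E y w" using d1[OF G] y(1) w by blast
  have "a 2 \<noteq> 0"
  proof (cases "gdist V E x w = 2")
    case True
    thus ?thesis using DR2 card_ne0[of "{w\<in>V. E z w \<and> gdist V E x w = 2}" w] fin w by auto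
  next
    case False
    have "gdist V E x z \<le> gdist V E x w + gdist V E w z" using d_tri[OF G] xu0 w z by blast
    moreover have "gdist V E w z = 1" using d1[OF G] w z Gsym[OF G] by blast
    moreover have "gdist V E x w \<le> gdist V E x y + gdist V E y w" using d_tri[OF G] xu0 w y by blast
    ultimately have xw: "gdist V E x w = 1" using False z y w by simp
    have uz: "gdist V E u z = 1" using d_sym[OF G, of u z] z u by simp
    have uy: "gdist V E u y = 2"
    proof -
      have "gdist V E u y \<le> gdist V E u z + gdist V E z y" using d_tri[OF G] u z y by blast
      moreover have "gdist V E z y = 1" using d_sym[OF G, of z y] z y by simp
      moreover have "gdist V E u x \<le> gdist V E u y + gdist V E y x" using d_tri[OF G] u y xu0 by blast
      moreover have "gdist V E u x = 3" "gdist V E y x = 1" using d_sym[OF G, of u x] d_sym[OF G, of y x] u y xu0 by auto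
      ultimately show ?thesis using uz by simp
    qed
    have uw: "gdist V E u w = 2"
    proof -
      have "gdist V E u w \<le> gdist V E u z + gdist V E z w" using d_tri[OF G] u z w by blast
      moreover have "gdist V E z w = 1" using d1[OF G] z w by blast
      moreover have "gdist V E u x \<le> gdist V E u w + gdist V E w x" using d_tri[OF G] u w xu0 by blast
      moreover have "gdist V E u x = 3" "gdist V E w x = 1" using d_sym[OF G, of u x] d_sym[OF G, of w x] u w xu0 xw by auto
      ultimately show ?thesis using uz by simp
    qed
    have "card {v\<in>V. E y v \<and> gdist V E u v = 2} = a 2"
      using DR[of 2 u y] u y uy D3 by auto
    thus ?thesis using card_ne0[of "{v\<in>V. E y v \<and> gdist V E u v = 2}" w] fin w Eyw uw by auto
  qed
  thus ?thesis using A0 C1 SUM B1 B2 by simp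
qed

lemma alg:
  fixes k pA pB qA qB qC s r x y sC rC e :: real
  assumes k: "k = 1 + pA + pB" and pA: "pA > 0" and pB: "pB > 0" and qA: "qA > 0" and qB: "qB > 0"
    and qC: "qC \<ge> 0" and s1: "s \<noteq> 1" and r1: "r \<noteq> 1"
    and Es1: "1 + pA * s + pB * x = k * s * s"
    and Es2: "qC * s + qA * x + qB * sC = k * s * x"
    and Er1: "1 + pA * r + pB * y = k * r * r"
    and Er2: "qC * r + qA * y + qB * rC = k * r * y"
    and Et1: "1 + pA * (s*r) + pB * (x*y) = k * (s*r) * (s*r)"
    and Et2: "qC * (s*r) + qA * (x*y) + qB * (sC*rC) = k * (s*r) * (x*y)"
    and X1: "s*r - 1 = e * (r - s)"
    and X2: "x*y - s*r = e * (s*y - x*r)"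
    and X3: "sC*rC - x*y = e * (x*rC - sC*y)"
  shows "(s^2 - x) * (1 - e*s) \<noteq> 0 \<and> k * ((s^2 - x) * (1 - e*s)) = (1 - x) * (e - s)"
proof -
  have bx: "pB * x = k*s*s - pA*s - 1" using Es1 by linarith
  have by1: "pB * y = k*r*r - pA*r - 1" using Er1 by linarith
  have bxy: "pB*(x*y) = k*(s*r)*(s*r) - pA*(s*r) - 1" using Et1 by linarith
  have "(k*s*s - pA*s - 1)*(k*r*r - pA*r - 1) = (pB*x)*(pB*y)" using bx by1 by simp
  also have "\<dots> = pB * (pB*(x*y))" by (simp add: algebra_simps)
  also have "\<dots> = pB*(k*(s*r)*(s*r) - pA*(s*r) - 1)" using bxy by simp
  finally have "(k*s*s - pA*s - 1)*(k*r*r - pA*r - 1) = pB*(k*(s*r)*(s*r) - pA*(s*r) - 1)" .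
  hence "(1-s)*(1-r)*(k*(1+s)*(1+r) + pA*(k*s*r - 1)) = 0" unfolding k by algebra
  hence star: "k*(1+s)*(1+r) + pA*(k*s*r - 1) = 0" using s1 r1 by simp
  have rs: "r \<noteq> s"
  proof
    assume "r = s"
    hence "s*s = 1" using X1 by simp
    hence "s = -1" using s1 by (metis add.inverse_inverse mult_cancel_left1 mult_minus1 square_eq_1_iff)
    hence "pA * (k - 1) = 0" using star \<open>r = s\<close> by (simp add: algebra_simps)
    thus False using pA pB k by simp
  qed
  have sm1: "s \<noteq> -1"
  proof
    assume sm: "s = -1"
    have "pA * (k*r + 1) = 0" using star sm by algebra
    hence kr: "k*r = -1" using pA by simp
    have "r \<noteq> -1"
    proof
      assume "r = -1" hence "k = 1" using kr by simp
      thus False using k pA pB by simp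
    qed
    have "(r+1)*(e+1) = 0" using X1 sm by algebra
    hence em: "e = -1" using \<open>r \<noteq> -1\<close> by simp
    have rn0: "r \<noteq> 0" using kr by auto
    have bxx: "pB * (x - 1) = 2*pA" using bx sm k by algebra
    hence "pB*(x-1) > 0" using pA by simp
    hence xg: "x > 1" using pB by (simp add: zero_less_mult_iff)
    have "pB * (y - r) = 0" using by1 kr k by algebra
    hence yr: "y = r" using pB by simp
    have "(sC + x) * (rC - y) = 0" using X3 em by algebra
    hence "sC + x = 0 \<or> rC - y = 0" by simp
    hence "rC = y \<or> sC = -x" by (auto simp: add_eq_0_iff)
    then consider "rC = y" | "sC = -x" by blast
    thus False
    proof cases
      case 1
      have "r * (qC + qA + qB + 1) = 0" using Er2 1 yr kr by algebra
      thus False using rn0 qA qB qC by simp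
    next
      case 2
      have "r * (2*qA*x + qC*(x-1)) = 0" using Et2 Er2 2 sm yr kr by algebra
      hence "2*qA*x + qC*(x-1) = 0" using rn0 by simp
      moreover have "2*qA*x > 0" using qA xg by simp
      moreover have "qC*(x-1) \<ge> 0" using qC xg by simp
      ultimately show False by linarith
    qed
  qed
  have r0: "r \<noteq> 0"
  proof
    assume r0: "r = 0"
    have yv: "pB * y = -1" using by1 r0 by simp
    hence yn: "y \<noteq> 0" by auto
    have "pB * (y * (x - 1)) = 0" using Et1 r0 yv by algebra
    hence x1: "x = 1" using yn pB by simp
    have es: "e * s = 1" using X1 r0 by algebra
    have rr: "qA * y + qB * rC = 0" using Er2 r0 by simp
    have "qB * (rC * (sC - 1)) = 0" using Er2 Et2 r0 x1 by algebra
    hence q: "rC * (sC - 1) = 0" using qB by simp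
    have w: "s*rC - s*y = rC - sC*y" using X3 x1 es q by algebra
    show False
    proof (cases "rC = 0")
      case True thus False using rr qA yn by simp
    next
      case False
      hence s31: "sC = 1" using q by simp
      have "(s-1)*(rC-y) = 0" using w s31 by algebra
      hence "rC = y" using s1 by simp
      hence "(qA + qB) * y = 0" using rr by (simp add: distrib_right)
      thus False using qA qB yn by simp
    qed
  qed
  have bsx: "pB * (s^2 - x) = (1-s)*((1+pA)*s+1)" using bx k by algebra
  have b1x: "pB * (1 - x) = (1-s)*(k*(1+s)-pA)" using bx k by algebra
  have n1: "(1+pA)*s + 1 \<noteq> 0"
  proof
    assume h: "(1+pA)*s + 1 = 0"
    have "pA * (k-1-pA) = 0" using h star by algebra
    thus False using pA pB k by simp
  qed
  have nx: "s^2 - x \<noteq> 0" using bsx n1 s1 pB by auto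
  have ee: "(r - s) * (1 - e*s) = r * (1 - s) * (1 + s)" using X1 by algebra
  have ne: "1 - e*s \<noteq> 0"
  proof
    assume "1 - e*s = 0"
    hence "r * (1 - s) * (1 + s) = 0" using ee by simp
    thus False using r0 s1 sm1 by (auto simp: add_eq_0_iff)
  qed
  have "pB * ((r-s) * (k * ((s^2 - x) * (1 - e*s)) - (1 - x) * (e - s))) = 0"
    using bx X1 star k by algebra
  hence "k * ((s^2 - x) * (1 - e*s)) = (1 - x) * (e - s)" using pB rs by simp
  thus ?thesis using nx ne by simp
qed


lemma pc_facts:
  assumes pc: "pseudo_cosine D a b c th f" and D3: "D \<ge> 3" and A0: "a 0 = 0" and C1: "c 1 = 1"
  shows "f 0 = 1 \<and> th = real (b 0) * f 1 \<and>
    1 + real (a 1) * f 1 + real (b 1) * f 2 = real (b 0) * f 1 * f 1 \<and>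
    real (c 2) * f 1 + real (a 2) * f 2 + real (b 2) * f 3 = real (b 0) * f 1 * f 2"
proof -
  have f0: "f 0 = 1" using pc unfolding pseudo_cosine_def by blast
  have R: "\<And>i. i < D \<Longrightarrow> (if i = 0 then 0 else real (c i) * f (i - 1)) + real (a i) * f i
              + real (b i) * f (i + 1) = th * f i" using pc unfolding pseudo_cosine_def by blast
  have r0: "real (b 0) * f 1 = th" using R[of 0] D3 f0 A0 by simp
  have r1: "1 + real (a 1) * f 1 + real (b 1) * f 2 = th * f 1" using R[of 1] D3 f0 C1 by (simp add: numeral_2_eq_2)
  have r2: "real (c 2) * f 1 + real (a 2) * f 2 + real (b 2) * f 3 = th * f 2" using R[of 2] D3 by simp
  show ?thesis using f0 r0 r1 r2 by simp
qed

lemma final_alg: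
  fixes k s x e :: real
  assumes "s \<noteq> 1" "(s^2 - x) * (1 - e*s) \<noteq> 0" "k * ((s^2 - x) * (1 - e*s)) = (1 - x) * (e - s)"
  shows "k = ((1 - s) * (1 - x)) / ((s^2 - x) * (1 - e*s)) * (s - e) / (s - 1)"
proof -
  define N where "N = (s^2 - x) * (1 - e*s)"
  have N: "N \<noteq> 0" "k * N = (1 - x) * (e - s)" using assms unfolding N_def by auto
  have s1: "s - 1 \<noteq> 0" using assms by simp
  have "((1 - s) * (1 - x)) / N * (s - e) / (s - 1) = ((1 - x) * (e - s)) / N"
    using s1 N(1) by (simp add: field_simps)
  also have "\<dots> = k" using N by (simp add: field_simps)
  finally show ?thesis unfolding N_def by simp
qed

theorem lemma13p1:
  fixes V :: "'v set" and E :: "'v \<Rightarrow> 'v \<Rightarrow> bool"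
    and D :: nat and a b c :: "nat \<Rightarrow> nat"
    and \<sigma> \<rho> :: "nat \<Rightarrow> real" and \<epsilon> :: real
  assumes drg: "distance_regular V E D a b c"
    and D3: "D \<ge> 3"
    and a1: "a 1 \<noteq> 0"
    and sig: "nontrivial_pc D a b c \<sigma>"
    and rho: "nontrivial_pc D a b c \<rho>"
    and tight: "tight_pair D a b c \<sigma> \<rho>"
    and eps: "auxiliary_parameter D \<sigma> \<rho> \<epsilon>"
  shows "\<sigma> 1 \<noteq> 1 \<and>
         (\<sigma> 1 ^ 2 - \<sigma> 2) * (1 - \<epsilon> * \<sigma> 1) \<noteq> 0 \<and>
         (let h = ((1 - \<sigma> 1) * (1 - \<sigma> 2)) / ((\<sigma> 1 ^ 2 - \<sigma> 2) * (1 - \<epsilon> * \<sigma> 1))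
          in real (b 0) = h * (\<sigma> 1 - \<epsilon>) / (\<sigma> 1 - 1))"
proof -
  have F: "a 0 = 0 \<and> c 1 = 1 \<and> a 1 + b 1 + c 1 = b 0 \<and> b 1 \<noteq> 0 \<and> b 2 \<noteq> 0 \<and> a 2 \<noteq> 0"
    using drg_facts[OF drg D3 a1] .
  have A0: "a 0 = 0" and C1: "c 1 = 1" using F by auto
  have s1: "\<sigma> 1 \<noteq> 1" using sig unfolding nontrivial_pc_def by blast
  have r1: "\<rho> 1 \<noteq> 1" using rho unfolding nontrivial_pc_def by blast
  obtain ts where ts: "pseudo_cosine D a b c ts \<sigma>"
    using sig unfolding nontrivial_pc_def is_pseudo_cosine_def by blast
  obtain tr where tr: "pseudo_cosine D a b c tr \<rho>"
    using rho unfolding nontrivial_pc_def is_pseudo_cosine_def by blast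
  obtain tt where tt: "pseudo_cosine D a b c tt (\<lambda>i. \<sigma> i * \<rho> i)"
    using tight unfolding tight_pair_def is_pseudo_cosine_def by blast
  have PS: "\<sigma> 0 = 1 \<and> ts = real (b 0) * \<sigma> 1 \<and>
    1 + real (a 1) * \<sigma> 1 + real (b 1) * \<sigma> 2 = real (b 0) * \<sigma> 1 * \<sigma> 1 \<and>
    real (c 2) * \<sigma> 1 + real (a 2) * \<sigma> 2 + real (b 2) * \<sigma> 3 = real (b 0) * \<sigma> 1 * \<sigma> 2"
    using pc_facts[OF ts D3 A0 C1] by blast
  have PR: "\<rho> 0 = 1 \<and> tr = real (b 0) * \<rho> 1 \<and>
    1 + real (a 1) * \<rho> 1 + real (b 1) * \<rho> 2 = real (b 0) * \<rho> 1 * \<rho> 1 \<and>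
    real (c 2) * \<rho> 1 + real (a 2) * \<rho> 2 + real (b 2) * \<rho> 3 = real (b 0) * \<rho> 1 * \<rho> 2"
    using pc_facts[OF tr D3 A0 C1] by blast
  have PT: "1 + real (a 1) * (\<sigma> 1 * \<rho> 1) + real (b 1) * (\<sigma> 2 * \<rho> 2) = real (b 0) * (\<sigma> 1 * \<rho> 1) * (\<sigma> 1 * \<rho> 1) \<and>
    real (c 2) * (\<sigma> 1 * \<rho> 1) + real (a 2) * (\<sigma> 2 * \<rho> 2) + real (b 2) * (\<sigma> 3 * \<rho> 3) = real (b 0) * (\<sigma> 1 * \<rho> 1) * (\<sigma> 2 * \<rho> 2)"
    using pc_facts[OF tt D3 A0 C1] by blast
  have AX: "\<And>i. i \<in> {1..D} \<Longrightarrow> \<sigma> i * \<rho> i - \<sigma> (i - 1) * \<rho> (i - 1)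
                 = \<epsilon> * (\<sigma> (i - 1) * \<rho> i - \<sigma> i * \<rho> (i - 1))"
    using eps unfolding auxiliary_parameter_def by blast
  have X1: "\<sigma> 1 * \<rho> 1 - 1 = \<epsilon> * (\<rho> 1 - \<sigma> 1)" using AX[of 1] D3 PS PR by simp
  have X2: "\<sigma> 2 * \<rho> 2 - \<sigma> 1 * \<rho> 1 = \<epsilon> * (\<sigma> 1 * \<rho> 2 - \<sigma> 2 * \<rho> 1)" using AX[of 2] D3 by simp
  have X3: "\<sigma> 3 * \<rho> 3 - \<sigma> 2 * \<rho> 2 = \<epsilon> * (\<sigma> 2 * \<rho> 3 - \<sigma> 3 * \<rho> 2)" using AX[of 3] D3 by simp
  have K: "real (b 0) = 1 + real (a 1) + real (b 1)" using F by (metis of_nat_1 of_nat_add add.commute add.left_commute)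
  have R: "(\<sigma> 1 ^ 2 - \<sigma> 2) * (1 - \<epsilon> * \<sigma> 1) \<noteq> 0 \<and>
     real (b 0) * ((\<sigma> 1 ^ 2 - \<sigma> 2) * (1 - \<epsilon> * \<sigma> 1)) = (1 - \<sigma> 2) * (\<epsilon> - \<sigma> 1)"
  proof (rule alg[where k="real (b 0)" and pA="real (a 1)" and pB="real (b 1)" and qA="real (a 2)" and qB="real (b 2)" and qC="real (c 2)" and s="\<sigma> 1" and r="\<rho> 1" and x="\<sigma> 2" and y="\<rho> 2" and sC="\<sigma> 3" and rC="\<rho> 3" and e=\<epsilon>])
  qed (use a1 K F s1 r1 PS PR PT X1 X2 X3 in auto)
  show ?thesis using s1 R final_alg[of "\<sigma> 1" "\<sigma> 2" \<epsilon> "real (b 0)"] unfolding Let_def by blast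
qed

end
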